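(* Let $(X,\mathcal T,P,\leq,\{\sigma_x:x\in X\})$ be a $p$-symmetrically typed topological space for a type $p\in P$, and assume $\sigma$ has least $p$-neighborhood. Then for every $x\in X$: (1) for every $y\in X$, $y\in p\vdash CL_1(\{x\})$ iff $x\in p\vdash CL_1(\{y\})$; (2) $p\vdash C(x)=p\vdash tr(\{x\})$; (3) for every $y\in p\vdash tr(\{x\})$, $p\vdash tr(\{x\})=p\vdash tr(\{y\})$.
   Context: A typed topological space $(X,\mathcal T,P,\leq,\{\sigma_x:x\in X\})$ consists of a topological space $(X,\mathcal T)$, a partially ordered set $(P,\leq)$ of types, and for each $x\in X$ a partial function $\sigma_x:\{O\in\mathcal T:x\in O\}\to P$ such that for all $U,V$ in its domain, $\sigma_x(U)\leq\sigma_x(V)$ iff $U\subseteq V$. $U$ is a type-$p$ neighborhood of $x$ ($p\vdash U(x)$) if $U$ is in the domain of $\sigma_x$ and $\sigma_x(U)=p$. $x$ is a $p$-accumulation point of $A$ if every type-$p$ neighborhood of $x$ meets $A$. $p\vdash CL_1(A)=A\cup\{p\text{-accumulation points of }A\}$, $p\vdash CL_n(A)=p\vdash CL_1(p\vdash CL_{n-1}(A))$, $p\vdash tr(A)=\bigcup_{n\ge1}p\vdash CL_n(A)$. $\sigma$ has least $p$-neighborhood if every $x$ has a type-$p$ neighborhood $p\vdash U_{min}(x)$ contained in every type-$p$ neighborhood of $x$. $X$ is $p$-symmetrically typed if for any $x,y\in X$ such that $y\notin U$ for some type-$p$ neighborhood $U$ of $x$, there is a type-$p$ neighborhood $V$ of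 $y$ with $x\notin V$. A set $A$ is type-$p$-connected if there do not exist families of type-$p$ neighborhoods $\{p\vdash U(x_i):i\in I\}$, $\{p\vdash U(x_j):j\in J\}$ with $I,J\neq\emptyset$, $A=\{x_i:i\in I\}\cup\{x_j:j\in J\}$ and $\bigcup_{i\in I}U(x_i)\cap\bigcup_{j\in J}U(x_j)=\emptyset$. $p\vdash C(x)$ is the union of all type-$p$-connected sets containing $x$. *)

theory Defs
  imports "HOL-Analysis.Abstract_Topology"
begin

text \<open>A typed topological space: topology T (carrier X = topspace T), a poset of
types given by a type of class order, and for each point x a partial function
sig x from the open sets containing x to types, reflecting inclusion.\<close>

definition typed_top :: "'a topology \<Rightarrow> ('a \<Rightarrow> 'a set \<Rightarrow> 'p::order option) \<Rightarrow> bool" where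
  "typed_top T sig \<longleftrightarrow>
     (\<forall>x U. sig x U \<noteq> None \<longrightarrow> openin T U \<and> x \<in> U) \<and>
     (\<forall>x U V p q. sig x U = Some p \<longrightarrow> sig x V = Some q \<longrightarrow> (p \<le> q \<longleftrightarrow> U \<subseteq> V))"

definition tnbhd :: "('a \<Rightarrow> 'a set \<Rightarrow> 'p option) \<Rightarrow> 'p \<Rightarrow> 'a \<Rightarrow> 'a set \<Rightarrow> bool" where
  "tnbhd sig p x U \<longleftrightarrow> sig x U = Some p"

definition acc_pt :: "'a topology \<Rightarrow> ('a \<Rightarrow> 'a set \<Rightarrow> 'p option) \<Rightarrow> 'p \<Rightarrow> 'a set \<Rightarrow> 'a \<Rightarrow> bool" where
  "acc_pt T sig p A x \<longleftrightarrow> x \<in> topspace T \<and> (\<forall>U. tnbhd sig p x U \<longrightarrow> U \<inter> A \<noteq> {})"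

definition CL1 :: "'a topology \<Rightarrow> ('a \<Rightarrow> 'a set \<Rightarrow> 'p option) \<Rightarrow> 'p \<Rightarrow> 'a set \<Rightarrow> 'a set" where
  "CL1 T sig p A = A \<union> {x. acc_pt T sig p A x}"

definition CLn :: "'a topology \<Rightarrow> ('a \<Rightarrow> 'a set \<Rightarrow> 'p option) \<Rightarrow> 'p \<Rightarrow> nat \<Rightarrow> 'a set \<Rightarrow> 'a set" where
  "CLn T sig p n A = (CL1 T sig p ^^ n) A"

definition tr :: "'a topology \<Rightarrow> ('a \<Rightarrow> 'a set \<Rightarrow> 'p option) \<Rightarrow> 'p \<Rightarrow> 'a set \<Rightarrow> 'a set" where
  "tr T sig p A = (\<Union>n\<in>{1..}. CLn T sig p n A)"

definition least_nbhd :: "'a topology \<Rightarrow> ('a \<Rightarrow> 'a set \<Rightarrow> 'p option) \<Rightarrow> 'p \<Rightarrow> bool" where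
  "least_nbhd T sig p \<longleftrightarrow>
     (\<forall>x\<in>topspace T. \<exists>U. tnbhd sig p x U \<and> (\<forall>V. tnbhd sig p x V \<longrightarrow> U \<subseteq> V))"

definition p_symmetric :: "'a topology \<Rightarrow> ('a \<Rightarrow> 'a set \<Rightarrow> 'p option) \<Rightarrow> 'p \<Rightarrow> bool" where
  "p_symmetric T sig p \<longleftrightarrow>
     (\<forall>x\<in>topspace T. \<forall>y\<in>topspace T.
        (\<exists>U. tnbhd sig p x U \<and> y \<notin> U) \<longrightarrow> (\<exists>V. tnbhd sig p y V \<and> x \<notin> V))"

text \<open>Type-p-connectedness. The families indexed by I and J are represented by
their sets of points B, C together with a choice of type-p neighborhood for each
point (f on B, g on C).\<close>
definition tconnected :: "('a \<Rightarrow> 'a set \<Rightarrow> 'p option) \<Rightarrow> 'p \<Rightarrow> 'a set \<Rightarrow> bool" where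
  "tconnected sig p A \<longleftrightarrow>
     \<not> (\<exists>B C f g. B \<noteq> {} \<and> C \<noteq> {} \<and> A = B \<union> C \<and>
          (\<forall>x\<in>B. tnbhd sig p x (f x)) \<and> (\<forall>y\<in>C. tnbhd sig p y (g y)) \<and>
          (\<Union>x\<in>B. f x) \<inter> (\<Union>y\<in>C. g y) = {})"

definition tcomp :: "'a topology \<Rightarrow> ('a \<Rightarrow> 'a set \<Rightarrow> 'p option) \<Rightarrow> 'p \<Rightarrow> 'a \<Rightarrow> 'a set" where
  "tcomp T sig p x = \<Union>{A. A \<subseteq> topspace T \<and> tconnected sig p A \<and> x \<in> A}"

end

theory Submission
  imports Defs
begin

locale tts =
  fixes T :: "'a topology" and sig :: "'a \<Rightarrow> 'a set \<Rightarrow> 'p::order option" and p :: 'p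
  assumes tt: "typed_top T sig" and sy: "p_symmetric T sig p" and ln: "least_nbhd T sig p"
begin

definition R where "R y z \<longleftrightarrow> (\<exists>U. tnbhd sig p y U \<and> z \<in> U)"

lemma uniq: "tnbhd sig p x U \<Longrightarrow> tnbhd sig p x V \<Longrightarrow> U = V"
  using tt unfolding typed_top_def tnbhd_def by (metis order_refl subset_antisym)

lemma nb_sub: "tnbhd sig p x U \<Longrightarrow> x \<in> U \<and> U \<subseteq> topspace T"
  using tt unfolding typed_top_def tnbhd_def by (metis openin_subset option.distinct(1))

lemma ex: "x \<in> topspace T \<Longrightarrow> \<exists>U. tnbhd sig p x U"
  using ln unfolding least_nbhd_def by blast

lemma R_top: "R y z \<Longrightarrow> y \<in> topspace T \<and> z \<in> topspace T"
  unfolding R_def using nb_sub by blast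

lemma R_sym: "R y z \<Longrightarrow> R z y"
proof -
  assume "R y z"
  then obtain U where U: "tnbhd sig p y U" "z \<in> U" unfolding R_def by blast
  have top: "y \<in> topspace T" "z \<in> topspace T" using R_top \<open>R y z\<close> by auto
  obtain V where V: "tnbhd sig p z V" using ex top by blast
  show ?thesis
  proof (rule ccontr)
    assume "\<not> R z y"
    then have "y \<notin> V" using V R_def by blast
    then obtain W where "tnbhd sig p y W" "z \<notin> W"
      using sy top V unfolding p_symmetric_def by blast
    with U uniq show False by blast
  qed
qed

lemma acc_iff: "acc_pt T sig p A y \<longleftrightarrow> y \<in> topspace T \<and> (\<exists>a\<in>A. R y a)"
  unfolding acc_pt_def R_def using ex uniq by blast

lemma CL1_eq: "CL1 T sig p A = A \<union> {y. y \<in> topspace T \<and> (\<exists>a\<in>A. R y a)}"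
  unfolding CL1_def using acc_iff by auto

lemma CLn_Suc: "CLn T sig p (Suc n) A = CL1 T sig p (CLn T sig p n A)"
  by (simp add: CLn_def)

lemma CLn_0: "CLn T sig p 0 A = A"
  by (simp add: CLn_def)

lemma CLn_sub: "CLn T sig p n {x} \<subseteq> {y. R\<^sup>*\<^sup>* x y}"
proof (induction n)
  case 0
  then show ?case by (simp add: CLn_0)
next
  case (Suc n)
  show ?case
  proof
    fix y assume "y \<in> CLn T sig p (Suc n) {x}"
    then have "y \<in> CLn T sig p n {x} \<or> (\<exists>a\<in>CLn T sig p n {x}. R y a)"
      by (auto simp: CLn_Suc CL1_eq)
    then show "y \<in> {y. R\<^sup>*\<^sup>* x y}"
    proof
      assume "y \<in> CLn T sig p n {x}"
      then show ?thesis using Suc.IH by blast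
    next
      assume "\<exists>a\<in>CLn T sig p n {x}. R y a"
      then obtain a where "a \<in> CLn T sig p n {x}" "R a y" using R_sym by blast
      then have "R\<^sup>*\<^sup>* x a" using Suc.IH by blast
      then show ?thesis using \<open>R a y\<close> by (simp add: rtranclp.rtrancl_into_rtrancl)
    qed
  qed
qed

lemma reach_CLn: assumes "x \<in> topspace T" "R\<^sup>*\<^sup>* x y" shows "\<exists>n\<ge>1. y \<in> CLn T sig p n {x}"
  using assms(2)
proof (induction rule: rtranclp_induct)
  case base
  then show ?case by (intro exI[of _ 1]) (simp add: CLn_def CL1_def)
next
  case (step y z)
  then obtain n where n: "n \<ge> 1" "y \<in> CLn T sig p n {x}" by blast
  have "z \<in> CLn T sig p (Suc n) {x}"
    unfolding CLn_Suc CL1_eq using n step R_sym R_top by blast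
  then show ?case by (intro exI[of _ "Suc n"]) simp
qed

lemma tr_eq: "x \<in> topspace T \<Longrightarrow> tr T sig p {x} = {y. R\<^sup>*\<^sup>* x y}"
proof
  show "tr T sig p {x} \<subseteq> {y. R\<^sup>*\<^sup>* x y}"
    unfolding tr_def using CLn_sub by blast
next
  assume x: "x \<in> topspace T"
  show "{y. R\<^sup>*\<^sup>* x y} \<subseteq> tr T sig p {x}"
  proof
    fix y assume "y \<in> {y. R\<^sup>*\<^sup>* x y}"
    then obtain n where "n \<ge> 1" "y \<in> CLn T sig p n {x}" using reach_CLn x by blast
    then show "y \<in> tr T sig p {x}" unfolding tr_def by auto
  qed
qed

lemma rt_sym: "R\<^sup>*\<^sup>* x y \<Longrightarrow> R\<^sup>*\<^sup>* y x"
proof (induction rule: rtranclp_induct)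
  case base
  then show ?case by simp
next
  case (step y z)
  then show ?case using R_sym by (meson converse_rtranclp_into_rtranclp)
qed

lemma rt_top: assumes "x \<in> topspace T" "R\<^sup>*\<^sup>* x y" shows "y \<in> topspace T"
  using assms(2) assms(1) by (induction rule: rtranclp_induct) (auto dest: R_top)

lemma half:
  assumes "B \<union> C = {y. R\<^sup>*\<^sup>* x y}" "x \<in> B"
    "\<forall>y\<in>B. tnbhd sig p y (f y)" "\<forall>y\<in>C. tnbhd sig p y (g y)"
    "(\<Union>y\<in>B. f y) \<inter> (\<Union>y\<in>C. g y) = {}"
  shows "C = {}"
proof -
  have all: "R\<^sup>*\<^sup>* x y \<Longrightarrow> y \<in> B" for y
  proof (induction rule: rtranclp_induct)
    case base
    then show ?case using assms(2) .
  next
    case (step y z)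
    have "z \<in> B \<union> C" using assms(1) step(1,2) by auto
    moreover have "z \<notin> C"
    proof
      assume zC: "z \<in> C"
      obtain U where U: "tnbhd sig p y U" "z \<in> U" using step(2) R_def by blast
      have "U = f y" using uniq U assms(3) step(3) by blast
      moreover have "z \<in> g z" using nb_sub assms(4) zC by blast
      ultimately show False using assms(5) U step(3) zC by blast
    qed
    ultimately show ?case by blast
  qed
  show ?thesis
  proof (rule ccontr)
    assume "C \<noteq> {}"
    then obtain c where c: "c \<in> C" by blast
    then have "c \<in> B" using all assms(1) by blast
    then have "c \<in> f c" "c \<in> g c" using nb_sub assms(3,4) c by blast+
    then show False using assms(5) c \<open>c \<in> B\<close> by blast
  qed
qed

lemma class_conn: "tconnected sig p {y. R\<^sup>*\<^sup>* x y}"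
  unfolding tconnected_def
proof (intro notI, elim exE conjE)
  fix B C f g
  assume H: "B \<noteq> {}" "C \<noteq> {}" "{y. R\<^sup>*\<^sup>* x y} = B \<union> C"
    "\<forall>x\<in>B. tnbhd sig p x (f x)" "\<forall>y\<in>C. tnbhd sig p y (g y)"
    "(\<Union>x\<in>B. f x) \<inter> (\<Union>y\<in>C. g y) = {}"
  have "x \<in> {y. R\<^sup>*\<^sup>* x y}" by simp
  then have "x \<in> B \<union> C" unfolding H(3) .
  then show False
  proof
    assume "x \<in> B"
    have "C = {}" by (rule half[of B C x f g]) (use H(3-6) \<open>x \<in> B\<close> in auto)
    then show False using H(2) by simp
  next
    assume "x \<in> C"
    have e1: "C \<union> B = {y. R\<^sup>*\<^sup>* x y}" using H(3) by (simp add: Un_commute)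
    have e2: "(\<Union>x\<in>C. g x) \<inter> (\<Union>y\<in>B. f y) = {}" using H(6) by (simp add: Int_commute)
    have "B = {}" by (rule half[of C B x g f]) (use e1 e2 H(4,5) \<open>x \<in> C\<close> in auto)
    then show False using H(1) by simp
  qed
qed

lemma conn_sub:
  assumes "A \<subseteq> topspace T" "tconnected sig p A" "x \<in> A"
  shows "A \<subseteq> {y. R\<^sup>*\<^sup>* x y}"
proof (rule ccontr)
  assume nt: "\<not> A \<subseteq> {y. R\<^sup>*\<^sup>* x y}"
  define K where "K = {y. R\<^sup>*\<^sup>* x y}"
  define N where "N = (\<lambda>y. SOME U. tnbhd sig p y U)"
  have N: "tnbhd sig p y (N y)" if yT: "y \<in> topspace T" for y
  proof -
    obtain U where "tnbhd sig p y U" using ex[OF yT] by blast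
    then show ?thesis unfolding N_def by (rule someI)
  qed
  have xK: "x \<in> K" unfolding K_def by simp
  have h1: "A \<inter> K \<noteq> {}" using xK assms(3) by blast
  have h2: "A - K \<noteq> {}" using nt unfolding K_def by blast
  have h3: "A = (A \<inter> K) \<union> (A - K)" by blast
  have h4: "\<forall>y\<in>A \<inter> K. tnbhd sig p y (N y)" using N assms(1) by blast
  have h5: "\<forall>y\<in>A - K. tnbhd sig p y (N y)" using N assms(1) by blast
  have h6: "(\<Union>y\<in>A \<inter> K. N y) \<inter> (\<Union>y\<in>A - K. N y) = {}"
  proof (rule ccontr)
    assume "(\<Union>y\<in>A \<inter> K. N y) \<inter> (\<Union>y\<in>A - K. N y) \<noteq> {}"
    then obtain z b c where z: "b \<in> A \<inter> K" "c \<in> A - K" "z \<in> N b" "z \<in> N c" by blast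
    have "R b z" using z(1,3) N assms(1) unfolding R_def by blast
    have "R c z" using z(2,4) N assms(1) unfolding R_def by blast
    then have "R z c" by (rule R_sym)
    have "R\<^sup>*\<^sup>* x b" using z(1) unfolding K_def by blast
    then have "R\<^sup>*\<^sup>* x z" using \<open>R b z\<close> by (rule rtranclp.rtrancl_into_rtrancl)
    then have "R\<^sup>*\<^sup>* x c" using \<open>R z c\<close> by (rule rtranclp.rtrancl_into_rtrancl)
    then show False using z(2) unfolding K_def by blast
  qed
  have "\<exists>B C f g. B \<noteq> {} \<and> C \<noteq> {} \<and> A = B \<union> C \<and>
          (\<forall>x\<in>B. tnbhd sig p x (f x)) \<and> (\<forall>y\<in>C. tnbhd sig p y (g y)) \<and>
          (\<Union>x\<in>B. f x) \<inter> (\<Union>y\<in>C. g y) = {}"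
    using h1 h2 h3 h4 h5 h6 by (intro exI[of _ "A \<inter> K"] exI[of _ "A - K"] exI[of _ N] conjI)
  then show False using assms(2) unfolding tconnected_def by (rule notE[rotated])
qed

end

theorem theorem2p18:
  fixes T :: "'a topology" and sig :: "'a \<Rightarrow> 'a set \<Rightarrow> 'p::order option" and p :: 'p
  assumes "typed_top T sig"
    and "p_symmetric T sig p"
    and "least_nbhd T sig p"
    and "x \<in> topspace T"
  shows "(\<forall>y\<in>topspace T. y \<in> CL1 T sig p {x} \<longleftrightarrow> x \<in> CL1 T sig p {y})
       \<and> tcomp T sig p x = tr T sig p {x}
       \<and> (\<forall>y\<in>tr T sig p {x}. tr T sig p {x} = tr T sig p {y})"
proof -
  interpret tts T sig p using assms(1-3) by unfold_locales
  have 1: "\<forall>y\<in>topspace T. y \<in> CL1 T sig p {x} \<longleftrightarrow> x \<in> CL1 T sig p {y}"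
    using assms(4) R_sym by (auto simp: CL1_eq)
  have sub: "{y. R\<^sup>*\<^sup>* x y} \<subseteq> topspace T" using rt_top assms(4) by blast
  have 2: "tcomp T sig p x = tr T sig p {x}"
    unfolding tcomp_def tr_eq[OF assms(4)]
  proof
    show "\<Union>{A. A \<subseteq> topspace T \<and> tconnected sig p A \<and> x \<in> A} \<subseteq> {y. R\<^sup>*\<^sup>* x y}"
      using conn_sub by blast
    show "{y. R\<^sup>*\<^sup>* x y} \<subseteq> \<Union>{A. A \<subseteq> topspace T \<and> tconnected sig p A \<and> x \<in> A}"
      using sub class_conn by blast
  qed
  have 3: "\<forall>y\<in>tr T sig p {x}. tr T sig p {x} = tr T sig p {y}"
  proof
    fix y assume "y \<in> tr T sig p {x}"
    then have xy: "R\<^sup>*\<^sup>* x y" using tr_eq[OF assms(4)] by blast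
    have yT: "y \<in> topspace T" using rt_top assms(4) xy by blast
    show "tr T sig p {x} = tr T sig p {y}"
      unfolding tr_eq[OF assms(4)] tr_eq[OF yT]
      using xy rt_sym by (auto intro: rtranclp_trans)
  qed
  show ?thesis using 1 2 3 by blast
qed

end
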